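(* Consider the linear model $\eta(x,\theta)=f^\top(x)\theta$ with $\Theta=\mathbb{R}^p$, and let $\theta^{(0)}\in\mathbb{R}^p$ be arbitrary. Define, for $\xi\in\Xi$, $$\phi_{eD}(\xi)=\min_{(\theta^{(1)},\dots,\theta^{(p)})\in\mathcal{V}_{\theta^{(0)}}}\frac{\frac1p\sum_{i=1}^p\|\eta(\cdot,\theta^{(i)})-\eta(\cdot,\theta^{(0)})\|_\xi^2}{\left[\prod_{j=1}^p\|\theta^{(j)}-\theta^{(0)}\|^2\right]^{1/p}},$$ $$\phi_{eA}(\xi)=\min_{(\theta^{(1)},\dots,\theta^{(p)})\in\mathcal{V}_{\theta^{(0)}}}\frac{\sum_{i=1}^p\|\theta^{(i)}-\theta^{(0)}\|^2\,\|\eta(\cdot,\theta^{(i)})-\eta(\cdot,\theta^{(0)})\|_\xi^2}{\left[\sum_{j=1}^p\|\theta^{(j)}-\theta^{(0)}\|^2\right]^2},$$ $$\phi_{eE_k}(\xi)=\min_{(\theta^{(1)},\dots,\theta^{(p)})\in\mathcal{V}_{\theta^{(0)}}}\sum_{i=1}^k\frac{\|\eta(\cdot,\theta^{(i)})-\eta(\cdot,\theta^{(0)})\|_\xi^2}{\|\theta^{(i)}-\theta^{(0)}\|^2}.$$ Then these minima are attained, $\phi_{eD}(\xi)=\phi_D(\xi)$ and $\phi_{eA}(\xi)=\phi_A(\xi)$ for every $\xi\in\Xi^+$, and $\phi_{eE_k}(\xi)=\phi_{E_k}(\xi)$ for every $\xi\in\Xi$ and $k\in\{1,\dots,p\}$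.
   Context: $\mathcal{X}$ is a finite set, $f:\mathcal{X}\to\mathbb{R}^p$, $\Xi$ the set of probability measures on $\mathcal{X}$, $M(\xi)=\sum_x f(x)f^\top(x)\xi(x)$, $\Xi^+=\{\mu\in\Xi: M(\mu)\text{ nonsingular}\}$. $\phi_D(\xi)=\det^{1/p}M(\xi)$, $\phi_A(\xi)=1/\mathrm{tr}M^{-1}(\xi)$, $\phi_{E_k}(\xi)$ = sum of the $k$ smallest eigenvalues (with multiplicity) of $M(\xi)$. $\mathcal{V}_{\theta^{(0)}}$ is the set of $p$-tuples $(\theta^{(1)},\dots,\theta^{(p)})$ of vectors in $\Theta$ with $\theta^{(i)}-\theta^{(0)}\neq0$ for all $i$ and $(\theta^{(i)}-\theta^{(0)})^\top(\theta^{(j)}-\theta^{(0)})=0$ for $i\ne j$. $\|\cdot\|$ is the Euclidean norm and $\|\eta(\cdot,\theta)-\eta(\cdot,\theta')\|_\xi^2=\sum_{x\in\mathcal{X}}[\eta(x,\theta)-\eta(x,\theta')]^2\xi(x)$. *)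

theory Defs
  imports "HOL-Analysis.Analysis" "HOL-Computational_Algebra.Polynomial"
begin

text \<open>A design is a probability measure on the finite design space, i.e. on the
  finite type 'x: a nonnegative weight function summing to one.\<close>
definition design :: "('x::finite \<Rightarrow> real) \<Rightarrow> bool" where
  "design \<xi> \<longleftrightarrow> (\<forall>x. 0 \<le> \<xi> x) \<and> sum \<xi> UNIV = 1"

definition outer :: "real^'p \<Rightarrow> real^'p \<Rightarrow> real^'p^'p" where
  "outer a b = (\<chi> i j. a$i * b$j)"

definition info_matrix :: "('x::finite \<Rightarrow> real^'p) \<Rightarrow> ('x \<Rightarrow> real) \<Rightarrow> real^'p^'p" where
  "info_matrix f \<xi> = (\<Sum>x\<in>UNIV. \<xi> x *\<^sub>R outer (f x) (f x))"

definition design_plus :: "('x::finite \<Rightarrow> real^'p) \<Rightarrow> ('x \<Rightarrow> real) \<Rightarrow> bool" where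
  "design_plus f \<xi> \<longleftrightarrow> design \<xi> \<and> invertible (info_matrix f \<xi>)"

definition phi_D :: "('x::finite \<Rightarrow> real^'p) \<Rightarrow> ('x \<Rightarrow> real) \<Rightarrow> real" where
  "phi_D f \<xi> = det (info_matrix f \<xi>) powr (1 / real CARD('p))"

definition phi_A :: "('x::finite \<Rightarrow> real^'p) \<Rightarrow> ('x \<Rightarrow> real) \<Rightarrow> real" where
  "phi_A f \<xi> = 1 / trace (matrix_inv (info_matrix f \<xi>))"

text \<open>Characteristic polynomial det(t I - A); its roots counted with multiplicity are
  the eigenvalues of A counted with multiplicity.\<close>
definition charpoly :: "real^'p^'p \<Rightarrow> real poly" where
  "charpoly A = det (\<chi> i j. (if i = j then [:0, 1:] else 0) - [: A$i$j :])"

definition eigenvalues_sorted :: "real^'p^'p \<Rightarrow> real list" where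
  "eigenvalues_sorted A = sorted_list_of_multiset (proots (charpoly A))"

definition phi_E :: "nat \<Rightarrow> ('x::finite \<Rightarrow> real^'p) \<Rightarrow> ('x \<Rightarrow> real) \<Rightarrow> real" where
  "phi_E k f \<xi> = sum_list (take k (eigenvalues_sorted (info_matrix f \<xi>)))"

definition xi_dist2 :: "('x::finite \<Rightarrow> 't \<Rightarrow> real) \<Rightarrow> ('x \<Rightarrow> real) \<Rightarrow> 't \<Rightarrow> 't \<Rightarrow> real" where
  "xi_dist2 \<eta> \<xi> th th' = (\<Sum>x\<in>UNIV. (\<eta> x th - \<eta> x th')\<^sup>2 * \<xi> x)"

definition lin_model :: "('x \<Rightarrow> real^'p) \<Rightarrow> 'x \<Rightarrow> real^'p \<Rightarrow> real" where
  "lin_model f x th = f x \<bullet> th"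

text \<open>V_{theta0} with Theta = R^p: p-tuples (lists of length p) of vectors theta^(i),
  theta^(i) - theta0 nonzero and pairwise orthogonal. Entry i of the list (0-based)
  is theta^(i+1).\<close>
definition V_set :: "real^'p \<Rightarrow> (real^'p) list set" where
  "V_set th0 = {ts. length ts = CARD('p) \<and> (\<forall>i<CARD('p). ts!i - th0 \<noteq> 0) \<and>
      (\<forall>i<CARD('p). \<forall>j<CARD('p). i \<noteq> j \<longrightarrow> (ts!i - th0) \<bullet> (ts!j - th0) = 0)}"

definition obj_eD :: "('x::finite \<Rightarrow> real^'p \<Rightarrow> real) \<Rightarrow> ('x \<Rightarrow> real) \<Rightarrow> real^'p \<Rightarrow> (real^'p) list \<Rightarrow> real" where
  "obj_eD \<eta> \<xi> th0 ts =
     ((1 / real CARD('p)) * (\<Sum>i<CARD('p). xi_dist2 \<eta> \<xi> (ts!i) th0)) /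
     ((\<Prod>j<CARD('p). (norm (ts!j - th0))\<^sup>2) powr (1 / real CARD('p)))"

definition obj_eA :: "('x::finite \<Rightarrow> real^'p \<Rightarrow> real) \<Rightarrow> ('x \<Rightarrow> real) \<Rightarrow> real^'p \<Rightarrow> (real^'p) list \<Rightarrow> real" where
  "obj_eA \<eta> \<xi> th0 ts =
     (\<Sum>i<CARD('p). (norm (ts!i - th0))\<^sup>2 * xi_dist2 \<eta> \<xi> (ts!i) th0) /
     (\<Sum>j<CARD('p). (norm (ts!j - th0))\<^sup>2)\<^sup>2"

definition obj_eE :: "nat \<Rightarrow> ('x::finite \<Rightarrow> real^'p \<Rightarrow> real) \<Rightarrow> ('x \<Rightarrow> real) \<Rightarrow> real^'p \<Rightarrow> (real^'p) list \<Rightarrow> real" where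
  "obj_eE k \<eta> \<xi> th0 ts =
     (\<Sum>i<k. xi_dist2 \<eta> \<xi> (ts!i) th0 / (norm (ts!i - th0))\<^sup>2)"

definition phi_eD where "phi_eD \<eta> \<xi> th0 = Inf (obj_eD \<eta> \<xi> th0 ` V_set th0)"
definition phi_eA where "phi_eA \<eta> \<xi> th0 = Inf (obj_eA \<eta> \<xi> th0 ` V_set th0)"
definition phi_eE where "phi_eE k \<eta> \<xi> th0 = Inf (obj_eE k \<eta> \<xi> th0 ` V_set th0)"

end

theory Submission
  imports Defs
begin



lemma onb_expand:
  fixes v :: "nat \<Rightarrow> real^'n"
  assumes nv: "\<And>i. i<CARD('n) \<Longrightarrow> norm (v i) = 1"
    and ov: "\<And>i j. i<CARD('n) \<Longrightarrow> j<CARD('n) \<Longrightarrow> i\<noteq>j \<Longrightarrow> v i \<bullet> v j = 0"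
  shows "x = (\<Sum>i<CARD('n). (x \<bullet> v i) *\<^sub>R v i)"
proof (rule ccontr)
  define y where "y = x - (\<Sum>i<CARD('n). (x \<bullet> v i) *\<^sub>R v i)"
  assume "x \<noteq> (\<Sum>i<CARD('n). (x \<bullet> v i) *\<^sub>R v i)"
  hence y0: "y \<noteq> 0" by (simp add: y_def)
  have vv: "v i \<bullet> v i = 1" if "i < CARD('n)" for i
    using nv[OF that] by (simp add: dot_square_norm)
  have yv: "y \<bullet> v j = 0" if j: "j < CARD('n)" for j
  proof -
    have "(\<Sum>i<CARD('n). (x \<bullet> v i) * (v i \<bullet> v j)) = (\<Sum>i<CARD('n). if i = j then x \<bullet> v j else 0)"
      by (rule sum.cong) (auto simp: ov vv j)
    also have "\<dots> = x \<bullet> v j" using j by simp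
    finally show ?thesis by (simp add: y_def inner_diff_left inner_sum_left)
  qed
  define T where "T = insert y (v ` {..<CARD('n)})"
  have inj: "inj_on v {..<CARD('n)}"
  proof (rule inj_onI)
    fix i j assume "i \<in> {..<CARD('n)}" "j \<in> {..<CARD('n)}" "v i = v j"
    thus "i = j" using ov vv by (metis lessThan_iff zero_neq_one)
  qed
  have ynot: "y \<notin> v ` {..<CARD('n)}"
    using yv vv by (metis imageE lessThan_iff zero_neq_one)
  have "pairwise orthogonal T"
    unfolding T_def pairwise_def orthogonal_def
    using yv ov by (auto simp: inner_commute)
  moreover have "0 \<notin> T" unfolding T_def using y0 vv by force
  ultimately have "independent T" by (rule pairwise_orthogonal_independent)
  hence "card T \<le> CARD('n)" using independent_bound by fastforce
  moreover have "card T = CARD('n) + 1"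
    unfolding T_def using ynot inj by (simp add: card_image)
  ultimately show False by simp
qed




lemma quad_zero:
  fixes R c :: real
  assumes "\<And>t. 0 \<le> 2*t*R + t^2*c"
  shows "R = 0"
proof -
  define s where "s = \<bar>c\<bar> + 1"
  have s: "s > 0" by (simp add: s_def)
  have "0 \<le> 2*(-R/ s)*R + (-R/ s)^2*c" by (rule assms)
  hence "0 \<le> (2*(-R/ s)*R + (-R/ s)^2*c) * s^2" using s by simp
  moreover have "(2*(-R/ s)*R + (-R/ s)^2*c) * s^2 = R^2 * (c - 2 * s)" using s by (simp add: field_simps power2_eq_square)
  ultimately have "0 \<le> R^2 * (c - 2 * s)" by simp
  moreover have "c - 2 * s < 0" by (simp add: s_def)
  ultimately have "R^2 \<le> 0" by (smt (verit) mult_pos_neg zero_less_power2)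
  thus ?thesis by simp
qed

lemma spectral:
  fixes A :: "real^'n^'n"
  assumes sym: "\<And>x y. x \<bullet> (A *v y) = (A *v x) \<bullet> y"
  shows "\<exists>ls::(real \<times> (real^'n)) list. length ls = CARD('n) \<and>
     (\<forall>i<CARD('n). norm (snd (ls!i)) = 1 \<and> A *v snd (ls!i) = fst (ls!i) *\<^sub>R snd (ls!i)) \<and>
     (\<forall>i<CARD('n). \<forall>j<CARD('n). i \<noteq> j \<longrightarrow> snd (ls!i) \<bullet> snd (ls!j) = 0) \<and>
     sorted (map fst ls)"
proof -
  define P where "P n ls \<longleftrightarrow> length ls = n \<and>
     (\<forall>i<n. norm (snd (ls!i)) = 1 \<and> A *v snd (ls!i) = fst (ls!i) *\<^sub>R snd (ls!i)) \<and>
     (\<forall>i<n. \<forall>j<n. i \<noteq> j \<longrightarrow> snd (ls!i) \<bullet> snd (ls!j) = 0) \<and>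
     sorted (map fst ls) \<and>
     (n > 0 \<longrightarrow> (\<forall>x. (\<forall>i<n. x \<bullet> snd (ls!i) = 0) \<longrightarrow> fst (ls!(n-1)) * (norm x)^2 \<le> x \<bullet> (A *v x)))"
    for n and ls :: "(real \<times> (real^'n)) list"
  have "n \<le> CARD('n) \<Longrightarrow> \<exists>ls. P n ls" for n
  proof (induction n)
    case 0 show ?case by (rule exI[of _ "[]"]) (simp add: P_def)
  next
    case (Suc n)
    then obtain ls where ls: "P n ls" by auto
    have n_lt: "n < CARD('n)" using Suc.prems by simp
    have len: "length ls = n" using ls by (simp add: P_def)
    define S where "S = {x::real^'n. \<forall>i<n. x \<bullet> snd (ls!i) = 0}"
    have S_eq: "S = (\<Inter>i\<in>{..<n}. {x. snd (ls!i) \<bullet> x = 0})"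
      by (auto simp: S_def inner_commute)
    have clS: "closed S" unfolding S_eq by (intro closed_INT ballI closed_hyperplane)
    have Ssc: "c *\<^sub>R x \<in> S" if "x \<in> S" for c x using that by (simp add: S_def)
    have Sadd: "x + y \<in> S" if "x \<in> S" "y \<in> S" for x y using that by (simp add: S_def inner_add_left)
    have "finite (snd ` set ls)" by simp
    have "dim (snd ` set ls) \<le> card (snd ` set ls)"
      by (rule dim_le_card[OF span_superset]) simp
    also have "\<dots> \<le> length ls" by (metis card_image_le card_length finite_set le_trans)
    finally have "dim (snd ` set ls) < DIM(real^'n)" using len n_lt by simp
    then obtain x0 :: "real^'n" where x0: "x0 \<noteq> 0" "\<And>y. y \<in> span (snd ` set ls) \<Longrightarrow> orthogonal x0 y"
      using orthogonal_to_subspace_exists by blast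
    have x0S: "x0 \<in> S"
      unfolding S_def using x0(2) len by (auto simp: orthogonal_def intro!: span_base nth_mem)
    define K where "K = S \<inter> sphere 0 1"
    have "x0 /\<^sub>R norm x0 \<in> K" using x0 x0S Ssc by (simp add: K_def)
    hence Kne: "K \<noteq> {}" by auto
    have cK: "compact K" unfolding K_def using clS by (intro closed_Int_compact) auto
    have "continuous_on K (\<lambda>x. x \<bullet> (A *v x))" by (intro continuous_intros)
    then obtain u where uK: "u \<in> K" and umin: "\<And>y. y \<in> K \<Longrightarrow> u \<bullet> (A *v u) \<le> y \<bullet> (A *v y)"
      using continuous_attains_inf[OF cK Kne] by blast
    define lam where "lam = u \<bullet> (A *v u)"
    have uS: "u \<in> S" and nu: "norm u = 1" using uK by (auto simp: K_def)
    have uu: "u \<bullet> u = 1" using nu by (simp add: dot_square_norm)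
    have minS: "lam * (norm y)^2 \<le> y \<bullet> (A *v y)" if yS: "y \<in> S" for y
    proof (cases "y = 0")
      case True thus ?thesis by simp
    next
      case False
      hence "y /\<^sub>R norm y \<in> K" using Ssc yS by (simp add: K_def)
      hence "lam \<le> (y /\<^sub>R norm y) \<bullet> (A *v (y /\<^sub>R norm y))" using umin lam_def by blast
      also have "\<dots> = (y \<bullet> (A *v y)) / (norm y)^2"
        by (simp add: matrix_vector_mult_scaleR power2_eq_square divide_inverse)
      finally show ?thesis using False by (simp add: field_simps)
    qed
    have eig_old: "A *v snd (ls!i) = fst (ls!i) *\<^sub>R snd (ls!i)" if "i < n" for i
      using ls that by (simp add: P_def)
    have AS: "A *v y \<in> S" if "y \<in> S" for y
      unfolding S_def mem_Collect_eq
    proof (intro allI impI)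
      fix i assume i: "i < n"
      have "(A *v y) \<bullet> snd (ls!i) = y \<bullet> (A *v snd (ls!i))" by (simp add: sym)
      also have "\<dots> = 0" using that i by (simp add: eig_old S_def)
      finally show "(A *v y) \<bullet> snd (ls!i) = 0" .
    qed
    define r where "r = A *v u - lam *\<^sub>R u"
    have rS: "r \<in> S" unfolding r_def using AS[OF uS] Ssc[OF uS] Sadd
      by (metis diff_conv_add_uminus scaleR_minus_left)
    have ru: "r \<bullet> u = 0" unfolding r_def inner_diff_left inner_scaleR_left uu
      by (simp add: lam_def inner_commute)
    have rAu: "r \<bullet> (A *v u) = (norm r)^2"
    proof -
      have "A *v u = r + lam *\<^sub>R u" by (simp add: r_def)
      hence "r \<bullet> (A *v u) = r \<bullet> r + lam * (r \<bullet> u)" by (simp add: inner_add_right)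
      thus ?thesis using ru by (simp add: dot_square_norm)
    qed
    have "\<forall>t. 0 \<le> 2*t*(norm r)^2 + t^2*(r \<bullet> (A *v r) - lam * (norm r)^2)"
    proof
      fix t :: real
      have yS: "u + t *\<^sub>R r \<in> S" using uS rS Ssc Sadd by blast
      have n2: "(norm (u + t *\<^sub>R r))^2 = 1 + t^2 * (norm r)^2"
      proof -
        have "(norm (u + t *\<^sub>R r))^2 = (u + t *\<^sub>R r) \<bullet> (u + t *\<^sub>R r)" by (simp add: dot_square_norm)
        also have "\<dots> = u \<bullet> u + 2 * t * (r \<bullet> u) + t^2 * (r \<bullet> r)"
          by (simp add: inner_add_left inner_add_right inner_commute power2_eq_square algebra_simps)
        finally show ?thesis by (simp add: uu ru dot_square_norm nu)
      qed
      have uAr: "u \<bullet> (A *v r) = r \<bullet> (A *v u)" by (metis sym inner_commute)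
      have q: "(u + t *\<^sub>R r) \<bullet> (A *v (u + t *\<^sub>R r)) = lam + 2*t*(norm r)^2 + t^2 * (r \<bullet> (A *v r))"
      proof -
        have "(u + t *\<^sub>R r) \<bullet> (A *v (u + t *\<^sub>R r)) = u \<bullet> (A *v u) + t * (u \<bullet> (A *v r)) + t * (r \<bullet> (A *v u)) + t * t * (r \<bullet> (A *v r))"
          by (simp add: matrix_vector_right_distrib matrix_vector_mult_scaleR inner_add_left inner_add_right distrib_left)
        thus ?thesis unfolding uAr rAu lam_def[symmetric] by (simp add: power2_eq_square)
      qed
      show "0 \<le> 2*t*(norm r)^2 + t^2*(r \<bullet> (A *v r) - lam * (norm r)^2)"
        using minS[OF yS] unfolding n2 q by (simp add: algebra_simps)
    qed
    hence "(norm r)^2 = 0" by (intro quad_zero) blast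
    hence eig: "A *v u = lam *\<^sub>R u" by (simp add: r_def)
    define ls' where "ls' = ls @ [(lam, u)]"
    have nth': "ls' ! i = (if i < n then ls ! i else (lam, u))" if "i < Suc n" for i
      using that len by (auto simp: ls'_def nth_append)
    have uorth: "u \<bullet> snd (ls!i) = 0" if "i < n" for i using uS that by (simp add: S_def)
    have srt: "sorted (map fst ls')"
    proof -
      have "fst (ls!i) \<le> lam" if "i < n" for i
      proof -
        have "n > 0" using that by simp
        hence "fst (ls!(n-1)) * (norm u)^2 \<le> u \<bullet> (A *v u)" using ls uS by (simp add: P_def S_def)
        hence "fst (ls!(n-1)) \<le> lam" using nu lam_def by simp
        moreover have "fst (ls!i) \<le> fst (ls!(n-1))"
          using ls that sorted_nth_mono[of "map fst ls" i "n-1"] by (simp add: P_def len)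
        ultimately show ?thesis by simp
      qed
      hence "\<forall>x\<in>set (map fst ls). x \<le> lam" by (auto simp: in_set_conv_nth len) (metis fst_conv)
      thus ?thesis using ls by (simp add: ls'_def P_def sorted_append)
    qed
    have "P (Suc n) ls'"
      unfolding P_def
    proof (intro conjI)
      show "length ls' = Suc n" by (simp add: ls'_def len)
      show "\<forall>i<Suc n. norm (snd (ls'!i)) = 1 \<and> A *v snd (ls'!i) = fst (ls'!i) *\<^sub>R snd (ls'!i)"
        using ls nu eig by (auto simp: nth' P_def)
      show "\<forall>i<Suc n. \<forall>j<Suc n. i \<noteq> j \<longrightarrow> snd (ls'!i) \<bullet> snd (ls'!j) = 0"
        using ls uorth by (auto simp: nth' P_def inner_commute)
      show "sorted (map fst ls')" by (rule srt)
      show "0 < Suc n \<longrightarrow> (\<forall>x. (\<forall>i<Suc n. x \<bullet> snd (ls'!i) = 0) \<longrightarrow> fst (ls'!(Suc n - 1)) * (norm x)^2 \<le> x \<bullet> (A *v x))"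
      proof (intro impI allI)
        fix x assume h: "\<forall>i<Suc n. x \<bullet> snd (ls'!i) = 0"
        hence "x \<in> S" unfolding S_def by (auto simp: nth') (metis less_SucI)
        thus "fst (ls'!(Suc n - 1)) * (norm x)^2 \<le> x \<bullet> (A *v x)" using minS by (simp add: nth')
      qed
    qed
    thus ?case by blast
  qed
  from this[of "CARD('n)"] obtain ls where "P (CARD('n)) ls" by auto
  thus ?thesis unfolding P_def by blast
qed




lemma det_onb:
  fixes B :: "real^'n^'n" and u :: "nat \<Rightarrow> real^'n" and mu :: "nat \<Rightarrow> real"
  assumes nv: "\<And>i. i<CARD('n) \<Longrightarrow> norm (u i) = 1"
    and ov: "\<And>i j. i<CARD('n) \<Longrightarrow> j<CARD('n) \<Longrightarrow> i\<noteq>j \<Longrightarrow> u i \<bullet> u j = 0"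
    and eig: "\<And>i. i<CARD('n) \<Longrightarrow> B *v u i = mu i *\<^sub>R u i"
  shows "det B = (\<Prod>i<CARD('n). mu i)"
proof -
  obtain h :: "'n \<Rightarrow> nat" where h: "bij_betw h UNIV {0..<CARD('n)}"
    using ex_bij_betw_finite_nat[of "UNIV :: 'n set"] by auto
  have hlt: "h r < CARD('n)" for r using h by (auto simp: bij_betw_def)
  have hinj: "h r = h s \<longleftrightarrow> r = s" for r s using h by (auto simp: bij_betw_def inj_on_def)
  have uu: "u i \<bullet> u j = (if i = j then 1 else 0)" if "i<CARD('n)" "j<CARD('n)" for i j
    using nv[OF that(1)] ov[OF that] by (auto simp: dot_square_norm)
  define U :: "real^'n^'n" where "U = (\<chi> r. u (h r))"
  define D :: "real^'n^'n" where "D = (\<chi> r s. if r = s then mu (h r) else 0)"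
  have "U ** transpose U = mat 1"
  proof -
    have "(U ** transpose U) $ r $ s = (mat 1 :: real^'n^'n) $ r $ s" for r s
    proof -
      have "(U ** transpose U) $ r $ s = u (h r) \<bullet> u (h s)"
        by (simp add: matrix_matrix_mult_def transpose_def U_def inner_vec_def)
      also have "\<dots> = (if r = s then 1 else 0)" using uu[OF hlt hlt] hinj by simp
      finally show ?thesis by (simp add: mat_def)
    qed
    thus ?thesis by (simp add: vec_eq_iff)
  qed
  hence "det U * det (transpose U) = 1" by (metis det_mul det_I)
  hence dU: "det (transpose U) \<noteq> 0" by auto
  have "B ** transpose U = transpose U ** D"
  proof -
    have "(B ** transpose U) $ r $ s = (transpose U ** D) $ r $ s" for r s
    proof -
      have "(B ** transpose U) $ r $ s = (B *v u (h s)) $ r"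
        by (simp add: matrix_matrix_mult_def transpose_def U_def matrix_vector_mult_def)
      also have "\<dots> = mu (h s) * u (h s) $ r" using eig[OF hlt] by simp
      also have "\<dots> = (transpose U ** D) $ r $ s"
        by (simp add: matrix_matrix_mult_def transpose_def U_def D_def if_distrib cong: if_cong)
      finally show ?thesis .
    qed
    thus ?thesis by (simp add: vec_eq_iff)
  qed
  hence "det B * det (transpose U) = det (transpose U) * det D" by (metis det_mul)
  hence "det B = det D" using dU by simp
  also have "det D = (\<Prod>r\<in>UNIV. mu (h r))" by (subst det_diagonal) (auto simp: D_def)
  also have "\<dots> = (\<Prod>i<CARD('n). mu i)"
    using prod.reindex_bij_betw[OF h, of mu] by (simp add: atLeast0LessThan)
  finally show ?thesis .
qed

lemma poly_det: "poly (det M) t = det (\<chi> i j. poly (M$i$j) t)"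
  by (simp add: det_def poly_sum poly_prod)

lemma charpoly_onb:
  fixes A :: "real^'n^'n" and u :: "nat \<Rightarrow> real^'n" and lam :: "nat \<Rightarrow> real"
  assumes nv: "\<And>i. i<CARD('n) \<Longrightarrow> norm (u i) = 1"
    and ov: "\<And>i j. i<CARD('n) \<Longrightarrow> j<CARD('n) \<Longrightarrow> i\<noteq>j \<Longrightarrow> u i \<bullet> u j = 0"
    and eig: "\<And>i. i<CARD('n) \<Longrightarrow> A *v u i = lam i *\<^sub>R u i"
  shows "charpoly A = (\<Prod>i<CARD('n). [:- lam i, 1:])"
proof -
  have "poly (charpoly A) t = poly (\<Prod>i<CARD('n). [:- lam i, 1:]) t" for t
  proof -
    define B :: "real^'n^'n" where "B = (\<chi> i j. (if i = j then t else 0) - A$i$j)"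
    have "poly (charpoly A) t = det B"
      unfolding charpoly_def poly_det B_def by (rule arg_cong[where f = det]) (auto simp: vec_eq_iff)
    also have "det B = (\<Prod>i<CARD('n). t - lam i)"
    proof (rule det_onb[OF nv ov])
      fix i assume i: "i < CARD('n)"
      have "(B *v u i) $ k = (t *\<^sub>R u i - A *v u i) $ k" for k
      proof -
        have "(B *v u i) $ k = (\<Sum>j\<in>UNIV. (if k = j then t * u i $ j else 0) - A$k$j * u i $ j)"
          unfolding B_def matrix_vector_mult_def by simp (intro sum.cong, auto simp: algebra_simps)
        also have "\<dots> = t * u i $ k - (\<Sum>j\<in>UNIV. A$k$j * u i $ j)"
          by (simp add: sum_subtractf)
        finally show ?thesis by (simp add: matrix_vector_mult_def)
      qed
      hence "B *v u i = t *\<^sub>R u i - A *v u i" by (simp add: vec_eq_iff)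
      thus "B *v u i = (t - lam i) *\<^sub>R u i" using eig[OF i] by (simp add: algebra_simps)
    qed
    also have "\<dots> = poly (\<Prod>i<CARD('n). [:- lam i, 1:]) t" by (simp add: poly_prod)
    finally show ?thesis .
  qed
  thus ?thesis using poly_eq_poly_eq_iff by blast
qed




lemma ln_jensen:
  fixes w x :: "'a \<Rightarrow> real"
  assumes fin: "finite I" and w0: "\<And>i. i \<in> I \<Longrightarrow> 0 \<le> w i" and ws: "(\<Sum>i\<in>I. w i) = 1"
    and xp: "\<And>i. i \<in> I \<Longrightarrow> 0 < x i"
  shows "(\<Sum>i\<in>I. w i * ln (x i)) \<le> ln (\<Sum>i\<in>I. w i * x i)" and "0 < (\<Sum>i\<in>I. w i * x i)"
proof -
  obtain i0 where i0: "i0 \<in> I" "0 < w i0" using ws w0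
    by (metis (no_types, lifting) order_less_le sum.neutral zero_neq_one)
  define s where "s = (\<Sum>i\<in>I. w i * x i)"
  have "w i0 * x i0 \<le> s" unfolding s_def
    by (rule member_le_sum) (use i0 w0 xp fin in \<open>auto intro: mult_nonneg_nonneg less_imp_le\<close>)
  moreover have "0 < w i0 * x i0" using i0 xp by simp
  ultimately have sp: "0 < s" by simp
  thus "0 < (\<Sum>i\<in>I. w i * x i)" by (simp add: s_def)
  have "w i * ln (x i) \<le> w i * (ln s + x i / s - 1)" if "i \<in> I" for i
  proof -
    have "ln (x i / s) \<le> x i / s - 1" using xp[OF that] sp by (intro ln_le_minus_one) simp
    hence "ln (x i) \<le> ln s + x i / s - 1" using xp[OF that] sp by (simp add: ln_div)
    thus ?thesis using w0[OF that] by (rule mult_left_mono)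
  qed
  hence "(\<Sum>i\<in>I. w i * ln (x i)) \<le> (\<Sum>i\<in>I. w i * (ln s + x i / s - 1))" by (rule sum_mono)
  also have "\<dots> = ln s * (\<Sum>i\<in>I. w i) + (\<Sum>i\<in>I. w i * x i) / s - (\<Sum>i\<in>I. w i)"
    by (simp add: algebra_simps sum.distrib sum_subtractf sum_distrib_left sum_divide_distrib)
  also have "\<dots> = ln s" using ws sp by (simp add: s_def)
  finally show "(\<Sum>i\<in>I. w i * ln (x i)) \<le> ln (\<Sum>i\<in>I. w i * x i)" by (simp add: s_def)
qed

lemma ineq_D:
  fixes a lam :: "nat \<Rightarrow> real" and w :: "nat \<Rightarrow> nat \<Rightarrow> real" and p :: nat
  assumes p: "0 < p" and a: "\<And>i. i < p \<Longrightarrow> 0 < a i" and lam: "\<And>j. j < p \<Longrightarrow> 0 < lam j"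
    and w0: "\<And>i j. i < p \<Longrightarrow> j < p \<Longrightarrow> 0 \<le> w i j"
    and row: "\<And>i. i < p \<Longrightarrow> (\<Sum>j<p. w i j) = 1"
    and col: "\<And>j. j < p \<Longrightarrow> (\<Sum>i<p. w i j) = 1"
  shows "(\<Prod>j<p. lam j) powr (1 / real p) \<le>
     ((1 / real p) * (\<Sum>i<p. a i * (\<Sum>j<p. w i j * lam j))) / ((\<Prod>i<p. a i) powr (1 / real p))"
proof -
  define m where "m i = (\<Sum>j<p. w i j * lam j)" for i
  have mp: "0 < m i" and lnm: "(\<Sum>j<p. w i j * ln (lam j)) \<le> ln (m i)" if "i < p" for i
    using ln_jensen[of "{..<p}" "w i" lam] w0 row lam that by (auto simp: m_def)
  have "(\<Sum>j<p. ln (lam j)) = (\<Sum>j<p. (\<Sum>i<p. w i j) * ln (lam j))" by (simp add: col)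
  also have "\<dots> = (\<Sum>i<p. \<Sum>j<p. w i j * ln (lam j))" unfolding sum_distrib_right by (rule sum.swap)
  also have "\<dots> \<le> (\<Sum>i<p. ln (m i))" by (intro sum_mono lnm) simp
  finally have L1: "(\<Sum>j<p. ln (lam j)) \<le> (\<Sum>i<p. ln (m i))" .
  have pp: "(\<Sum>i<p. 1 / real p) = 1" using p by simp
  have L2: "(\<Sum>i<p. (1 / real p) * ln (a i * m i)) \<le> ln (\<Sum>i<p. (1 / real p) * (a i * m i))"
   and L3: "0 < (\<Sum>i<p. (1 / real p) * (a i * m i))"
    using ln_jensen[of "{..<p}" "\<lambda>_. 1 / real p" "\<lambda>i. a i * m i"] pp a mp by auto
  define N where "N = (1 / real p) * (\<Sum>i<p. a i * m i)"
  have N: "N = (\<Sum>i<p. (1 / real p) * (a i * m i))" by (simp add: N_def sum_distrib_left)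
  have Npos: "0 < N" using L3 N by simp
  have Pa: "0 < (\<Prod>i<p. a i)" using a by (intro prod_pos) simp
  have Pl: "0 < (\<Prod>j<p. lam j)" using lam by (intro prod_pos) simp
  have "(1 / real p) * (ln (\<Prod>i<p. a i) + ln (\<Prod>j<p. lam j)) = (1 / real p) * ((\<Sum>i<p. ln (a i)) + (\<Sum>j<p. ln (lam j)))"
  proof -
    have "ln (\<Prod>i<p. a i) = (\<Sum>i<p. ln (a i))" using a by (intro ln_prod) (auto simp: less_imp_neq[symmetric])
    moreover have "ln (\<Prod>j<p. lam j) = (\<Sum>j<p. ln (lam j))" using lam by (intro ln_prod) (auto simp: less_imp_neq[symmetric])
    ultimately show ?thesis by simp
  qed
  also have "\<dots> \<le> (1 / real p) * ((\<Sum>i<p. ln (a i)) + (\<Sum>i<p. ln (m i)))"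
    using L1 p by (intro mult_left_mono) auto
  also have "\<dots> = (\<Sum>i<p. (1 / real p) * ln (a i * m i))"
  proof -
    have "(\<Sum>i<p. (1 / real p) * ln (a i * m i)) = (\<Sum>i<p. (1 / real p) * ln (a i) + (1 / real p) * ln (m i))"
    proof (rule sum.cong)
      fix i assume "i \<in> {..<p}"
      hence "0 < a i" "0 < m i" using a mp by auto
      thus "(1 / real p) * ln (a i * m i) = (1 / real p) * ln (a i) + (1 / real p) * ln (m i)"
        by (simp add: ln_mult distrib_left)
    qed simp
    thus ?thesis by (simp add: sum.distrib sum_distrib_left distrib_left)
  qed
  also have "\<dots> \<le> ln N" using L2 N by simp
  finally have "exp ((1 / real p) * (ln (\<Prod>i<p. a i) + ln (\<Prod>j<p. lam j))) \<le> N"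
    using Npos by (metis exp_le_cancel_iff exp_ln)
  hence "(\<Prod>i<p. a i) powr (1 / real p) * (\<Prod>j<p. lam j) powr (1 / real p) \<le> N"
    using Pa Pl Npos by (simp add: powr_def exp_add[symmetric] distrib_left)
  moreover have "0 < (\<Prod>i<p. a i) powr (1 / real p)" using Pa by (metis powr_gt_zero less_irrefl)
  ultimately have "(\<Prod>j<p. lam j) powr (1 / real p) \<le> N / (\<Prod>i<p. a i) powr (1 / real p)"
    by (simp add: pos_le_divide_eq mult.commute)
  thus ?thesis by (simp add: N_def m_def)
qed

lemma ineq_A:
  fixes a lam :: "nat \<Rightarrow> real" and w :: "nat \<Rightarrow> nat \<Rightarrow> real" and p :: nat
  assumes p: "0 < p" and a: "\<And>i. i < p \<Longrightarrow> 0 < a i" and lam: "\<And>j. j < p \<Longrightarrow> 0 < lam j"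
    and w0: "\<And>i j. i < p \<Longrightarrow> j < p \<Longrightarrow> 0 \<le> w i j"
    and row: "\<And>i. i < p \<Longrightarrow> (\<Sum>j<p. w i j) = 1"
    and col: "\<And>j. j < p \<Longrightarrow> (\<Sum>i<p. w i j) = 1"
  shows "1 / (\<Sum>j<p. 1 / lam j) \<le>
     (\<Sum>i<p. a i * (a i * (\<Sum>j<p. w i j * lam j))) / (\<Sum>i<p. a i)^2"
proof -
  define m where "m i = (\<Sum>j<p. w i j * lam j)" for i
  have mp: "0 < m i" if "i < p" for i
    using ln_jensen(2)[of "{..<p}" "w i" lam] w0 row lam that by (auto simp: m_def)
  have tang: "2 / m - l / m^2 \<le> 1 / l" if "0 < m" "0 < l" for m l :: real
  proof -
    have "1 / l - (2 / m - l / m^2) = (m - l)^2 / (l * m^2)" using that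
      by (simp add: field_simps power2_eq_square)
    also have "\<dots> \<ge> 0" using that by simp
    finally show ?thesis by simp
  qed
  have invm: "1 / m i \<le> (\<Sum>j<p. w i j / lam j)" if i: "i < p" for i
  proof -
    have "(\<Sum>j<p. w i j * (2 / m i - lam j / (m i)^2)) \<le> (\<Sum>j<p. w i j * (1 / lam j))"
      using tang mp[OF i] lam w0[OF i] by (intro sum_mono mult_left_mono) auto
    moreover have "(\<Sum>j<p. w i j * (2 / m i - lam j / (m i)^2)) = 2 / m i * (\<Sum>j<p. w i j) - (\<Sum>j<p. w i j * lam j) / (m i)^2"
      by (simp add: algebra_simps sum_subtractf sum_distrib_left sum_divide_distrib)
    moreover have "2 / m i * (\<Sum>j<p. w i j) - (\<Sum>j<p. w i j * lam j) / (m i)^2 = 1 / m i"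
    proof -
      have "(\<Sum>j<p. w i j * lam j) = m i" by (simp add: m_def)
      thus ?thesis using mp[OF i] row[OF i] by (simp add: field_simps power2_eq_square)
    qed
    ultimately show ?thesis by simp
  qed
  define T where "T = (\<Sum>i<p. 1 / m i)"
  have Tpos: "0 < T" unfolding T_def using p mp by (intro sum_pos) auto
  have "T \<le> (\<Sum>i<p. \<Sum>j<p. w i j / lam j)" unfolding T_def by (intro sum_mono invm) simp
  also have "\<dots> = (\<Sum>j<p. \<Sum>i<p. w i j / lam j)" by (rule sum.swap)
  also have "\<dots> = (\<Sum>j<p. 1 / lam j)" by (intro sum.cong) (simp_all add: col flip: sum_divide_distrib)
  finally have TL: "T \<le> (\<Sum>j<p. 1 / lam j)" .
  define S where "S = (\<Sum>i<p. a i)"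
  have Spos: "0 < S" unfolding S_def using p a by (intro sum_pos) auto
  define c where "c = S / T"
  have amc: "2 * a i * c - c^2 / m i \<le> a i * (a i * m i)" if i: "i < p" for i
  proof -
    have "a i * (a i * m i) - (2 * a i * c - c^2 / m i) = (a i * m i - c)^2 / m i"
      using mp[OF i] by (simp add: field_simps power2_eq_square)
    also have "\<dots> \<ge> 0" using mp[OF i] by simp
    finally show ?thesis by simp
  qed
  have "(\<Sum>i<p. 2 * a i * c - c^2 / m i) \<le> (\<Sum>i<p. a i * (a i * m i))" by (intro sum_mono amc) simp
  moreover have "(\<Sum>i<p. 2 * a i * c - c^2 / m i) = 2 * c * S - c^2 * T"
    by (simp add: S_def T_def sum_subtractf sum_distrib_left sum_divide_distrib algebra_simps)
  moreover have "2 * c * S - c^2 * T = S^2 / T" using Tpos by (simp add: c_def field_simps power2_eq_square)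
  ultimately have key: "S^2 / T \<le> (\<Sum>i<p. a i * (a i * m i))" by simp
  have "1 / (\<Sum>j<p. 1 / lam j) \<le> 1 / T" using Tpos TL by (intro divide_left_mono) auto
  also have "1 / T = (S^2 / T) / S^2" using Spos by simp
  also have "\<dots> \<le> (\<Sum>i<p. a i * (a i * m i)) / S^2" using key Spos by (intro divide_right_mono) auto
  finally show ?thesis by (simp add: S_def m_def)
qed

lemma ineq_E:
  fixes lam :: "nat \<Rightarrow> real" and w :: "nat \<Rightarrow> nat \<Rightarrow> real" and p k :: nat
  assumes k: "1 \<le> k" "k \<le> p"
    and srt: "\<And>i j. i \<le> j \<Longrightarrow> j < p \<Longrightarrow> lam i \<le> lam j"
    and w0: "\<And>i j. i < p \<Longrightarrow> j < p \<Longrightarrow> 0 \<le> w i j"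
    and row: "\<And>i. i < p \<Longrightarrow> (\<Sum>j<p. w i j) = 1"
    and col: "\<And>j. j < p \<Longrightarrow> (\<Sum>i<p. w i j) = 1"
  shows "(\<Sum>j<k. lam j) \<le> (\<Sum>i<k. \<Sum>j<p. w i j * lam j)"
proof -
  define c where "c j = (\<Sum>i<k. w i j)" for j
  define L where "L = lam (k - 1)"
  have c0: "0 \<le> c j" if "j < p" for j unfolding c_def using w0 that k by (intro sum_nonneg) auto
  have c1: "c j \<le> 1" if j: "j < p" for j
  proof -
    have "c j \<le> (\<Sum>i<p. w i j)" unfolding c_def using w0 j k by (intro sum_mono2) auto
    thus ?thesis using col[OF j] by simp
  qed
  have csum: "(\<Sum>j<p. c j) = real k"
  proof -
    have "(\<Sum>j<p. c j) = (\<Sum>i<k. \<Sum>j<p. w i j)" unfolding c_def by (rule sum.swap)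
    also have "\<dots> = (\<Sum>i<k. 1)" using row k by (intro sum.cong) auto
    finally show ?thesis by simp
  qed
  have R: "(\<Sum>i<k. \<Sum>j<p. w i j * lam j) = (\<Sum>j<p. c j * lam j)"
    unfolding c_def sum_distrib_right by (rule sum.swap)
  have ind: "(\<Sum>j<p. (if j < k then x j else 0)) = (\<Sum>j<k. x j)" for x :: "nat \<Rightarrow> real"
  proof -
    have "(\<Sum>j<p. (if j < k then x j else 0)) = (\<Sum>j\<in>{..<p} \<inter> {j. j < k}. x j)"
      by (simp add: sum.inter_restrict)
    also have "{..<p} \<inter> {j. j < k} = {..<k}" using k by auto
    finally show ?thesis .
  qed
  have trm: "(c j - (if j < k then 1 else 0)) * L \<le> c j * lam j - (if j < k then lam j else 0)"
    if j: "j < p" for j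
  proof (cases "j < k")
    case True
    hence "lam j \<le> L" unfolding L_def using srt k j by auto
    moreover have "c j - 1 \<le> 0" using c1[OF j] by simp
    ultimately have "(c j - 1) * L \<le> (c j - 1) * lam j" by (rule mult_left_mono_neg)
    thus ?thesis using True by (simp add: algebra_simps)
  next
    case False
    hence "L \<le> lam j" unfolding L_def using srt k j by auto
    hence "c j * L \<le> c j * lam j" using c0[OF j] by (rule mult_left_mono)
    thus ?thesis using False by simp
  qed
  have "(\<Sum>j<p. (c j - (if j < k then 1 else 0)) * L) \<le> (\<Sum>j<p. c j * lam j - (if j < k then lam j else 0))"
    by (intro sum_mono trm) simp
  moreover have "(\<Sum>j<p. (c j - (if j < k then 1 else 0)) * L) = L * ((\<Sum>j<p. c j) - (\<Sum>j<p. (if j < k then 1 else 0)))"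
    by (simp add: sum_subtractf sum_distrib_left algebra_simps del: sum.If_cases)
  moreover have "(\<Sum>j<p. c j * lam j - (if j < k then lam j else 0)) = (\<Sum>j<p. c j * lam j) - (\<Sum>j<p. (if j < k then lam j else 0))"
    by (simp add: sum_subtractf del: sum.If_cases)
  ultimately have "0 \<le> (\<Sum>j<p. c j * lam j) - (\<Sum>j<k. lam j)"
    using csum ind[of lam] ind[of "\<lambda>_. 1"] by simp
  thus ?thesis using R by simp
qed




lemma info_entry: "info_matrix f \<xi> $ i $ j = (\<Sum>z\<in>UNIV. \<xi> z * (f z $ i * f z $ j))"
  by (simp add: info_matrix_def outer_def sum_component)

lemma info_quad:
  "x \<bullet> (info_matrix f \<xi> *v y) = (\<Sum>z\<in>UNIV. \<xi> z * ((f z \<bullet> x) * (f z \<bullet> y)))"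
proof -
  have "x \<bullet> (info_matrix f \<xi> *v y) = (\<Sum>i\<in>UNIV. \<Sum>j\<in>UNIV. \<Sum>z\<in>UNIV. \<xi> z * ((f z $ i * x $ i) * (f z $ j * y $ j)))"
    by (simp add: inner_vec_def matrix_vector_mult_def info_entry sum_distrib_left sum_distrib_right mult_ac)
  also have "\<dots> = (\<Sum>i\<in>UNIV. \<Sum>z\<in>UNIV. \<Sum>j\<in>UNIV. \<xi> z * ((f z $ i * x $ i) * (f z $ j * y $ j)))"
    by (intro sum.cong refl) (rule sum.swap)
  also have "\<dots> = (\<Sum>z\<in>UNIV. \<Sum>i\<in>UNIV. \<Sum>j\<in>UNIV. \<xi> z * ((f z $ i * x $ i) * (f z $ j * y $ j)))"
    by (rule sum.swap)
  also have "\<dots> = (\<Sum>z\<in>UNIV. \<xi> z * ((\<Sum>i\<in>UNIV. f z $ i * x $ i) * (\<Sum>j\<in>UNIV. f z $ j * y $ j)))"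
    unfolding sum_product by (simp only: sum_distrib_left)
  also have "\<dots> = (\<Sum>z\<in>UNIV. \<xi> z * ((f z \<bullet> x) * (f z \<bullet> y)))"
    by (simp add: inner_vec_def)
  finally show ?thesis .
qed

lemma info_sym: "x \<bullet> (info_matrix f \<xi> *v y) = (info_matrix f \<xi> *v x) \<bullet> y"
  by (simp add: info_quad inner_commute[of _ x] inner_commute[of "info_matrix f \<xi> *v x"] mult.commute)

lemma info_psd: "design \<xi> \<Longrightarrow> 0 \<le> x \<bullet> (info_matrix f \<xi> *v x)"
  by (simp add: info_quad design_def sum_nonneg)

lemma xi_dist2_lin: "xi_dist2 (lin_model f) \<xi> t th0 = (t - th0) \<bullet> (info_matrix f \<xi> *v (t - th0))"
  by (simp add: xi_dist2_def lin_model_def info_quad inner_diff_right power2_eq_square mult_ac)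




lemma parseval:
  fixes v :: "nat \<Rightarrow> real^'n"
  assumes nv: "\<And>i. i<CARD('n) \<Longrightarrow> norm (v i) = 1"
    and ov: "\<And>i j. i<CARD('n) \<Longrightarrow> j<CARD('n) \<Longrightarrow> i\<noteq>j \<Longrightarrow> v i \<bullet> v j = 0"
  shows "x \<bullet> y = (\<Sum>i<CARD('n). (x \<bullet> v i) * (y \<bullet> v i))"
proof -
  have "x \<bullet> y = (\<Sum>i<CARD('n). (x \<bullet> v i) *\<^sub>R v i) \<bullet> y"
    using onb_expand[OF nv ov, where x=x] by (rule arg_cong[where f="\<lambda>z. z \<bullet> y"])
  thus ?thesis by (simp add: inner_sum_left inner_commute[of "v _" y])
qed

lemma rayleigh:
  fixes A :: "real^'n^'n" and u :: "nat \<Rightarrow> real^'n" and lam :: "nat \<Rightarrow> real"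
  assumes sym: "\<And>x y. x \<bullet> (A *v y) = (A *v x) \<bullet> y"
    and nv: "\<And>i. i<CARD('n) \<Longrightarrow> norm (u i) = 1"
    and ov: "\<And>i j. i<CARD('n) \<Longrightarrow> j<CARD('n) \<Longrightarrow> i\<noteq>j \<Longrightarrow> u i \<bullet> u j = 0"
    and eig: "\<And>i. i<CARD('n) \<Longrightarrow> A *v u i = lam i *\<^sub>R u i"
  shows "x \<bullet> (A *v x) = (\<Sum>j<CARD('n). lam j * (x \<bullet> u j)^2)"
proof -
  have "x \<bullet> (A *v x) = (\<Sum>j<CARD('n). (x \<bullet> u j) * ((A *v x) \<bullet> u j))" by (rule parseval[OF nv ov])
  also have "\<dots> = (\<Sum>j<CARD('n). lam j * (x \<bullet> u j)^2)"
  proof (rule sum.cong)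
    fix j assume "j \<in> {..<CARD('n)}"
    hence "(A *v x) \<bullet> u j = lam j * (x \<bullet> u j)" using eig sym[of x "u j"] by (simp add: inner_commute)
    thus "(x \<bullet> u j) * ((A *v x) \<bullet> u j) = lam j * (x \<bullet> u j)^2" by (simp add: power2_eq_square)
  qed simp
  finally show ?thesis .
qed

lemma weights:
  fixes A :: "real^'n^'n" and u :: "nat \<Rightarrow> real^'n" and lam :: "nat \<Rightarrow> real" and th0 :: "real^'n"
    and w :: "nat \<Rightarrow> nat \<Rightarrow> real"
  assumes sym: "\<And>x y. x \<bullet> (A *v y) = (A *v x) \<bullet> y"
    and nv: "\<And>i. i<CARD('n) \<Longrightarrow> norm (u i) = 1"
    and ov: "\<And>i j. i<CARD('n) \<Longrightarrow> j<CARD('n) \<Longrightarrow> i\<noteq>j \<Longrightarrow> u i \<bullet> u j = 0"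
    and eig: "\<And>i. i<CARD('n) \<Longrightarrow> A *v u i = lam i *\<^sub>R u i"
    and ts: "ts \<in> V_set th0"
    and w_def: "w = (\<lambda>i j. ((ts!i - th0) \<bullet> u j)^2 / (norm (ts!i - th0))^2)"
  shows "\<And>i. i < CARD('n) \<Longrightarrow> 0 < (norm (ts!i - th0))^2"
    and "\<And>i j. i < CARD('n) \<Longrightarrow> j < CARD('n) \<Longrightarrow> 0 \<le> w i j"
    and "\<And>i. i < CARD('n) \<Longrightarrow> (\<Sum>j<CARD('n). w i j) = 1"
    and "\<And>j. j < CARD('n) \<Longrightarrow> (\<Sum>i<CARD('n). w i j) = 1"
    and "\<And>i. i < CARD('n) \<Longrightarrow> (ts!i - th0) \<bullet> (A *v (ts!i - th0)) = (norm (ts!i - th0))^2 * (\<Sum>j<CARD('n). w i j * lam j)"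
proof -
  define d where "d i = ts!i - th0" for i
  have d0: "d i \<noteq> 0" if "i < CARD('n)" for i using ts that by (simp add: V_set_def d_def)
  have dorth: "d i \<bullet> d j = 0" if "i < CARD('n)" "j < CARD('n)" "i \<noteq> j" for i j
    using ts that by (simp add: V_set_def d_def)
  show apos: "0 < (norm (ts!i - th0))^2" if "i < CARD('n)" for i using d0[OF that] by (simp add: d_def)
  show "0 \<le> w i j" if "i < CARD('n)" "j < CARD('n)" for i j by (simp add: w_def)
  show "(\<Sum>j<CARD('n). w i j) = 1" if i: "i < CARD('n)" for i
  proof -
    have "(\<Sum>j<CARD('n). w i j) = (\<Sum>j<CARD('n). (d i \<bullet> u j)^2) / (norm (d i))^2"
      by (simp add: w_def d_def sum_divide_distrib)
    also have "(\<Sum>j<CARD('n). (d i \<bullet> u j)^2) = d i \<bullet> d i"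
      using parseval[OF nv ov, where x="d i" and y="d i"] by (simp add: power2_eq_square)
    finally show ?thesis using d0[OF i] by (simp add: dot_square_norm)
  qed
  show "(\<Sum>i<CARD('n). w i j) = 1" if j: "j < CARD('n)" for j
  proof -
    define v where "v i = d i /\<^sub>R norm (d i)" for i
    have nvv: "norm (v i) = 1" if "i < CARD('n)" for i using d0[OF that] by (simp add: v_def)
    have ovv: "v i \<bullet> v k = 0" if "i < CARD('n)" "k < CARD('n)" "i \<noteq> k" for i k
      using dorth[OF that] by (simp add: v_def)
    have "(\<Sum>i<CARD('n). w i j) = (\<Sum>i<CARD('n). (u j \<bullet> v i)^2)"
    proof (rule sum.cong)
      fix i assume "i \<in> {..<CARD('n)}"
      hence "d i \<noteq> 0" using d0 by simp
      thus "w i j = (u j \<bullet> v i)^2"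
        by (simp add: w_def v_def d_def[symmetric] inner_commute power_mult_distrib field_simps)
    qed simp
    also have "\<dots> = u j \<bullet> u j" using parseval[OF nvv ovv, where x="u j" and y="u j"] by (simp add: power2_eq_square)
    also have "\<dots> = 1" using nv[OF j] by (simp add: dot_square_norm)
    finally show ?thesis .
  qed
  show "(ts!i - th0) \<bullet> (A *v (ts!i - th0)) = (norm (ts!i - th0))^2 * (\<Sum>j<CARD('n). w i j * lam j)"
    if i: "i < CARD('n)" for i
  proof -
    have "(ts!i - th0) \<bullet> (A *v (ts!i - th0)) = (\<Sum>j<CARD('n). lam j * ((ts!i - th0) \<bullet> u j)^2)"
      by (rule rayleigh[OF sym nv ov eig])
    also have "\<dots> = (norm (ts!i - th0))^2 * (\<Sum>j<CARD('n). w i j * lam j)"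
      using apos[OF i] by (simp add: sum_distrib_left w_def mult_ac)
    finally show ?thesis .
  qed
qed




lemma spectral_info:
  fixes f :: "'x::finite \<Rightarrow> real^'p" and \<xi> :: "'x \<Rightarrow> real"
  shows "\<exists>lam u. (\<forall>i<CARD('p). norm (u i) = 1) \<and>
     (\<forall>i<CARD('p). \<forall>j<CARD('p). i \<noteq> j \<longrightarrow> u i \<bullet> u j = 0) \<and>
     (\<forall>i<CARD('p). info_matrix f \<xi> *v u i = lam i *\<^sub>R u i) \<and>
     (\<forall>i j. i \<le> j \<longrightarrow> j < CARD('p) \<longrightarrow> lam i \<le> lam j)"
proof -
  obtain ls :: "(real \<times> (real^'p)) list" where ls: "length ls = CARD('p)"
     "\<forall>i<CARD('p). norm (snd (ls!i)) = 1 \<and> info_matrix f \<xi> *v snd (ls!i) = fst (ls!i) *\<^sub>R snd (ls!i)"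
     "\<forall>i<CARD('p). \<forall>j<CARD('p). i \<noteq> j \<longrightarrow> snd (ls!i) \<bullet> snd (ls!j) = 0"
     "sorted (map fst ls)"
    using spectral[of "info_matrix f \<xi>"] info_sym by blast
  have "fst (ls!i) \<le> fst (ls!j)" if "i \<le> j" "j < CARD('p)" for i j
    using sorted_nth_mono[OF ls(4), of i j] that ls(1) by simp
  thus ?thesis using ls
    by (intro exI[of _ "\<lambda>i. fst (ls!i)"] exI[of _ "\<lambda>i. snd (ls!i)"]) auto
qed

lemma mset_sum_single: "(\<Sum>i<n. {#f i#}) = mset (map f [0..<n])"
  by (induction n) auto

lemma eig_sorted:
  fixes A :: "real^'n^'n" and u :: "nat \<Rightarrow> real^'n" and lam :: "nat \<Rightarrow> real"
  assumes nv: "\<And>i. i<CARD('n) \<Longrightarrow> norm (u i) = 1"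
    and ov: "\<And>i j. i<CARD('n) \<Longrightarrow> j<CARD('n) \<Longrightarrow> i\<noteq>j \<Longrightarrow> u i \<bullet> u j = 0"
    and eig: "\<And>i. i<CARD('n) \<Longrightarrow> A *v u i = lam i *\<^sub>R u i"
    and srt: "\<And>i j. i \<le> j \<Longrightarrow> j < CARD('n) \<Longrightarrow> lam i \<le> lam j"
  shows "eigenvalues_sorted A = map lam [0..<CARD('n)]"
proof -
  have "proots (charpoly A) = proots (\<Prod>i<CARD('n). [:- lam i, 1:])"
    by (simp add: charpoly_onb[OF nv ov eig])
  also have "\<dots> = (\<Sum>i<CARD('n). proots [:- lam i, 1:])" by (rule proots_prod) simp
  also have "\<dots> = (\<Sum>i<CARD('n). {#lam i#})" by simp
  also have "\<dots> = mset (map lam [0..<CARD('n)])" by (rule mset_sum_single)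
  finally have e: "proots (charpoly A) = mset (map lam [0..<CARD('n)])" .
  have "sorted (map lam [0..<CARD('n)])" using srt by (auto simp: sorted_iff_nth_mono)
  have "eigenvalues_sorted A = sorted_list_of_multiset (mset (map lam [0..<CARD('n)]))"
    by (simp only: eigenvalues_sorted_def e)
  also have "\<dots> = sort (map lam [0..<CARD('n)])" by (rule sorted_list_of_multiset_mset)
  also have "\<dots> = map lam [0..<CARD('n)]" by (rule sorted_sort_id) fact
  finally show ?thesis .
qed

lemma phi_E_eq:
  fixes f :: "'x::finite \<Rightarrow> real^'p" and u :: "nat \<Rightarrow> real^'p" and lam :: "nat \<Rightarrow> real"
  assumes nv: "\<And>i. i<CARD('p) \<Longrightarrow> norm (u i) = 1"
    and ov: "\<And>i j. i<CARD('p) \<Longrightarrow> j<CARD('p) \<Longrightarrow> i\<noteq>j \<Longrightarrow> u i \<bullet> u j = 0"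
    and eig: "\<And>i. i<CARD('p) \<Longrightarrow> info_matrix f \<xi> *v u i = lam i *\<^sub>R u i"
    and srt: "\<And>i j. i \<le> j \<Longrightarrow> j < CARD('p) \<Longrightarrow> lam i \<le> lam j"
    and k: "k \<le> CARD('p)"
  shows "phi_E k f \<xi> = (\<Sum>j<k. lam j)"
proof -
  have "phi_E k f \<xi> = sum_list (take k (map lam [0..<CARD('p)]))"
    by (simp add: phi_E_def eig_sorted[OF nv ov eig srt])
  also have "take k (map lam [0..<CARD('p)]) = map lam [0..<k]" using k by (simp add: take_map min_def)
  also have "sum_list (map lam [0..<k]) = (\<Sum>j<k. lam j)"
    using sum_set_upt_conv_sum_list_nat[of lam 0 k] by (simp add: atLeast0LessThan)
  finally show ?thesis .
qed




lemma trace_inv: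
  fixes A :: "real^'n^'n" and u :: "nat \<Rightarrow> real^'n" and lam :: "nat \<Rightarrow> real"
  assumes sym: "\<And>x y. x \<bullet> (A *v y) = (A *v x) \<bullet> y"
    and nv: "\<And>i. i<CARD('n) \<Longrightarrow> norm (u i) = 1"
    and ov: "\<And>i j. i<CARD('n) \<Longrightarrow> j<CARD('n) \<Longrightarrow> i\<noteq>j \<Longrightarrow> u i \<bullet> u j = 0"
    and eig: "\<And>i. i<CARD('n) \<Longrightarrow> A *v u i = lam i *\<^sub>R u i"
    and lp: "\<And>i. i<CARD('n) \<Longrightarrow> 0 < lam i"
    and inv: "invertible A"
  shows "trace (matrix_inv A) = (\<Sum>i<CARD('n). 1 / lam i)"
proof -
  define B where "B = matrix_inv A"
  have "A ** B = mat 1 \<and> B ** A = mat 1"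
    using inv unfolding invertible_def B_def matrix_inv_def by (rule someI_ex)
  hence AB: "A *v (B *v x) = x" for x by (simp add: matrix_vector_mul_assoc)
  have Bu: "(B *v x) \<bullet> u i = (x \<bullet> u i) / lam i" if i: "i < CARD('n)" for x i
  proof -
    have "lam i * ((B *v x) \<bullet> u i) = (B *v x) \<bullet> (A *v u i)" by (simp add: eig[OF i])
    also have "\<dots> = x \<bullet> u i" by (simp add: sym AB)
    finally show ?thesis using lp[OF i] by (simp add: field_simps)
  qed
  have diag: "B $ r $ r = (\<Sum>i<CARD('n). (u i $ r)^2 / lam i)" for r
  proof -
    have "(B *v axis r 1) $ r = B $ r $ r"
      by (simp add: matrix_vector_mult_def axis_def if_distrib[of "\<lambda>z. B $ r $ _ * z"] cong: if_cong)
    hence "B $ r $ r = axis r 1 \<bullet> (B *v axis r 1)"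
      by (simp add: inner_axis')
    also have "\<dots> = (\<Sum>i<CARD('n). (axis r 1 \<bullet> u i) * ((B *v axis r 1) \<bullet> u i))"
      by (rule parseval[OF nv ov])
    also have "\<dots> = (\<Sum>i<CARD('n). (u i $ r)^2 / lam i)"
      by (intro sum.cong refl) (simp add: Bu inner_axis' power2_eq_square)
    finally show ?thesis .
  qed
  have "trace B = (\<Sum>r\<in>UNIV. \<Sum>i<CARD('n). (u i $ r)^2 / lam i)" by (simp add: trace_def diag)
  also have "\<dots> = (\<Sum>i<CARD('n). (\<Sum>r\<in>UNIV. (u i $ r)^2) / lam i)"
    by (subst sum.swap) (simp add: sum_divide_distrib)
  also have "\<dots> = (\<Sum>i<CARD('n). 1 / lam i)"
  proof (intro sum.cong refl)
    fix i assume "i \<in> {..<CARD('n)}"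
    hence "u i \<bullet> u i = 1" using nv by (simp add: dot_square_norm)
    thus "(\<Sum>r\<in>UNIV. (u i $ r)^2) / lam i = 1 / lam i" by (simp add: inner_vec_def power2_eq_square)
  qed
  finally show ?thesis by (simp add: B_def)
qed




lemma partE:
  fixes f :: "'x::finite \<Rightarrow> real^'p" and th0 :: "real^'p"
  assumes dsg: "design \<xi>" and k: "1 \<le> k" "k \<le> CARD('p)"
  shows "(\<exists>ts\<in>V_set th0. obj_eE k (lin_model f) \<xi> th0 ts = phi_eE k (lin_model f) \<xi> th0) \<and>
        phi_eE k (lin_model f) \<xi> th0 = phi_E k f \<xi>"
proof -
  obtain lam u where H: "(\<forall>i<CARD('p). norm (u i) = 1) \<and>
     (\<forall>i<CARD('p). \<forall>j<CARD('p). i \<noteq> j \<longrightarrow> u i \<bullet> u j = 0) \<and>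
     (\<forall>i<CARD('p). info_matrix f \<xi> *v u i = lam i *\<^sub>R u i) \<and>
     (\<forall>i j. i \<le> j \<longrightarrow> j < CARD('p) \<longrightarrow> lam i \<le> lam j)"
    using spectral_info[of f \<xi>] by (elim exE) (rule that)
  have nv: "\<And>i. i < CARD('p) \<Longrightarrow> norm (u i) = 1"
    and ov: "\<And>i j. i<CARD('p) \<Longrightarrow> j<CARD('p) \<Longrightarrow> i\<noteq>j \<Longrightarrow> u i \<bullet> u j = 0"
    and eig: "\<And>i. i<CARD('p) \<Longrightarrow> info_matrix f \<xi> *v u i = lam i *\<^sub>R u i"
    and srt: "\<And>i j. i \<le> j \<Longrightarrow> j < CARD('p) \<Longrightarrow> lam i \<le> lam j"
    using H by auto
  define ts0 where "ts0 = map (\<lambda>i. th0 + u i) [0..<CARD('p)]"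
  have ts0i: "ts0!i - th0 = u i" if "i < CARD('p)" for i using that by (simp add: ts0_def)
  have ts0V: "ts0 \<in> V_set th0"
    unfolding V_set_def
  proof (intro CollectI conjI allI impI)
    show "length ts0 = CARD('p)" by (simp add: ts0_def)
    fix i assume i: "i < CARD('p)"
    show "ts0!i - th0 \<noteq> 0" using nv[OF i] ts0i[OF i] by auto
    fix j assume "j < CARD('p)" "i \<noteq> j"
    thus "(ts0!i - th0) \<bullet> (ts0!j - th0) = 0" using ov i ts0i by simp
  qed
  have obj0: "obj_eE k (lin_model f) \<xi> th0 ts0 = (\<Sum>j<k. lam j)"
    unfolding obj_eE_def
  proof (intro sum.cong refl)
    fix i assume "i \<in> {..<k}"
    hence i: "i < CARD('p)" using k by simp
    have "u i \<bullet> u i = 1" using nv[OF i] by (simp add: dot_square_norm)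
    thus "xi_dist2 (lin_model f) \<xi> (ts0!i) th0 / (norm (ts0!i - th0))^2 = lam i"
      by (simp add: xi_dist2_lin ts0i[OF i] eig[OF i] nv[OF i])
  qed
  have low: "(\<Sum>j<k. lam j) \<le> obj_eE k (lin_model f) \<xi> th0 ts" if ts: "ts \<in> V_set th0" for ts
  proof -
    define w where "w = (\<lambda>i j. ((ts!i - th0) \<bullet> u j)^2 / (norm (ts!i - th0))^2)"
    note WW = weights[where A="info_matrix f \<xi>" and u=u and lam=lam and w=w]
    have W1: "\<And>i. i < CARD('p) \<Longrightarrow> 0 < (norm (ts!i - th0))^2"
      by (rule WW(1)) (use info_sym nv ov eig ts w_def in blast)+
    have W2: "\<And>i j. i < CARD('p) \<Longrightarrow> j < CARD('p) \<Longrightarrow> 0 \<le> w i j"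
      by (rule WW(2)) (use info_sym nv ov eig ts w_def in blast)+
    have W3: "\<And>i. i < CARD('p) \<Longrightarrow> (\<Sum>j<CARD('p). w i j) = 1"
      by (rule WW(3)) (use info_sym nv ov eig ts w_def in blast)+
    have W4: "\<And>j. j < CARD('p) \<Longrightarrow> (\<Sum>i<CARD('p). w i j) = 1"
      by (rule WW(4)) (use info_sym nv ov eig ts w_def in blast)+
    have W5: "\<And>i. i < CARD('p) \<Longrightarrow> (ts!i - th0) \<bullet> (info_matrix f \<xi> *v (ts!i - th0)) = (norm (ts!i - th0))^2 * (\<Sum>j<CARD('p). w i j * lam j)"
      by (rule WW(5)) (use info_sym nv ov eig ts w_def in blast)+
    have "obj_eE k (lin_model f) \<xi> th0 ts = (\<Sum>i<k. \<Sum>j<CARD('p). w i j * lam j)"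
      unfolding obj_eE_def
    proof (intro sum.cong refl)
      fix i assume "i \<in> {..<k}"
      hence i: "i < CARD('p)" using k by simp
      show "xi_dist2 (lin_model f) \<xi> (ts!i) th0 / (norm (ts!i - th0))^2 = (\<Sum>j<CARD('p). w i j * lam j)"
        using W1[OF i] W5[OF i] by (simp add: xi_dist2_lin)
    qed
    moreover have "(\<Sum>j<k. lam j) \<le> (\<Sum>i<k. \<Sum>j<CARD('p). w i j * lam j)"
      by (rule ineq_E[OF k srt W2 W3 W4])
    ultimately show ?thesis by simp
  qed
  have "phi_eE k (lin_model f) \<xi> th0 = (\<Sum>j<k. lam j)"
    unfolding phi_eE_def
  proof (rule cInf_eq_minimum)
    show "(\<Sum>j<k. lam j) \<in> obj_eE k (lin_model f) \<xi> th0 ` V_set th0"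
      using ts0V obj0 by (metis image_eqI)
  qed (use low in auto)
  moreover have "phi_E k f \<xi> = (\<Sum>j<k. lam j)" by (rule phi_E_eq[OF nv ov eig srt k(2)])
  ultimately show ?thesis using ts0V obj0 by auto
qed




lemma partDA:
  fixes f :: "'x::finite \<Rightarrow> real^'p" and th0 :: "real^'p"
  assumes dp: "design_plus f \<xi>"
  shows "(\<exists>ts\<in>V_set th0. obj_eD (lin_model f) \<xi> th0 ts = phi_eD (lin_model f) \<xi> th0) \<and>
        phi_eD (lin_model f) \<xi> th0 = phi_D f \<xi> \<and>
        (\<exists>ts\<in>V_set th0. obj_eA (lin_model f) \<xi> th0 ts = phi_eA (lin_model f) \<xi> th0) \<and>
        phi_eA (lin_model f) \<xi> th0 = phi_A f \<xi>"
proof -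
  have dsg: "design \<xi>" and inv: "invertible (info_matrix f \<xi>)" using dp by (auto simp: design_plus_def)
  obtain lam u where H: "(\<forall>i<CARD('p). norm (u i) = 1) \<and>
     (\<forall>i<CARD('p). \<forall>j<CARD('p). i \<noteq> j \<longrightarrow> u i \<bullet> u j = 0) \<and>
     (\<forall>i<CARD('p). info_matrix f \<xi> *v u i = lam i *\<^sub>R u i) \<and>
     (\<forall>i j. i \<le> j \<longrightarrow> j < CARD('p) \<longrightarrow> lam i \<le> lam j)"
    using spectral_info[of f \<xi>] by (elim exE) (rule that)
  have nv: "\<And>i. i < CARD('p) \<Longrightarrow> norm (u i) = 1"
    and ov: "\<And>i j. i<CARD('p) \<Longrightarrow> j<CARD('p) \<Longrightarrow> i\<noteq>j \<Longrightarrow> u i \<bullet> u j = 0"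
    and eig: "\<And>i. i<CARD('p) \<Longrightarrow> info_matrix f \<xi> *v u i = lam i *\<^sub>R u i"
    using H by auto
  have uu: "u i \<bullet> u i = 1" if "i < CARD('p)" for i using nv[OF that] by (simp add: dot_square_norm)
  have lp: "0 < lam i" if i: "i < CARD('p)" for i
  proof -
    have "0 \<le> u i \<bullet> (info_matrix f \<xi> *v u i)" by (rule info_psd[OF dsg])
    hence ge: "0 \<le> lam i" using uu[OF i] by (simp add: eig[OF i])
    have "lam i \<noteq> 0"
    proof
      assume "lam i = 0"
      hence z: "info_matrix f \<xi> *v u i = 0" by (simp add: eig[OF i])
      obtain B where "B ** info_matrix f \<xi> = mat 1" using inv by (auto simp: invertible_def)
      hence "u i = B *v (info_matrix f \<xi> *v u i)" by (simp add: matrix_vector_mul_assoc)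
      hence "u i = 0" using z by simp
      thus False using nv[OF i] by simp
    qed
    thus ?thesis using ge by simp
  qed
  have pos: "0 < CARD('p)" by simp
  define ts0 where "ts0 = map (\<lambda>i. th0 + (1 / sqrt (lam i)) *\<^sub>R u i) [0..<CARD('p)]"
  have ts0i: "ts0!i - th0 = (1 / sqrt (lam i)) *\<^sub>R u i" if "i < CARD('p)" for i
    using that by (simp add: ts0_def)
  have ts0V: "ts0 \<in> V_set th0"
    unfolding V_set_def
  proof (intro CollectI conjI allI impI)
    show "length ts0 = CARD('p)" by (simp add: ts0_def)
    fix i assume i: "i < CARD('p)"
    show "ts0!i - th0 \<noteq> 0" using nv[OF i] ts0i[OF i] lp[OF i] by auto
    fix j assume "j < CARD('p)" "i \<noteq> j"
    thus "(ts0!i - th0) \<bullet> (ts0!j - th0) = 0" using ov i ts0i by simp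
  qed
  have xd0: "xi_dist2 (lin_model f) \<xi> (ts0!i) th0 = 1" if i: "i < CARD('p)" for i
  proof -
    have "xi_dist2 (lin_model f) \<xi> (ts0!i) th0 = (1 / sqrt (lam i))^2 * lam i * (u i \<bullet> u i)"
      by (simp add: xi_dist2_lin ts0i[OF i] matrix_vector_mult_scaleR eig[OF i] power2_eq_square)
    also have "\<dots> = 1" using lp[OF i] uu[OF i] by (simp add: power_divide)
    finally show ?thesis .
  qed
  have nd0: "(norm (ts0!i - th0))^2 = 1 / lam i" if i: "i < CARD('p)" for i
    using lp[OF i] nv[OF i] by (simp add: ts0i[OF i] power_divide)
  have detA: "det (info_matrix f \<xi>) = (\<Prod>i<CARD('p). lam i)" by (rule det_onb[OF nv ov eig])
  have Pl: "0 < (\<Prod>i<CARD('p). lam i)" using lp by (intro prod_pos) simp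
  define L where "L = (\<Sum>j<CARD('p). 1 / lam j)"
  have Lpos: "0 < L" unfolding L_def using lp pos by (intro sum_pos) (auto simp: lessThan_empty_iff)
  have trA: "trace (matrix_inv (info_matrix f \<xi>)) = L"
    unfolding L_def by (rule trace_inv[OF info_sym nv ov eig lp inv])
  have WS: "\<exists>w. (\<forall>i<CARD('p). 0 < (norm (ts!i - th0))^2) \<and>
      (\<forall>i<CARD('p). \<forall>j<CARD('p). 0 \<le> w i j) \<and>
      (\<forall>i<CARD('p). (\<Sum>j<CARD('p). w i j) = 1) \<and>
      (\<forall>j<CARD('p). (\<Sum>i<CARD('p). w i j) = 1) \<and>
      (\<forall>i<CARD('p). xi_dist2 (lin_model f) \<xi> (ts!i) th0 = (norm (ts!i - th0))^2 * (\<Sum>j<CARD('p). w i j * lam j))"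
    if ts: "ts \<in> V_set th0" for ts
  proof -
    define w where "w = (\<lambda>i j. ((ts!i - th0) \<bullet> u j)^2 / (norm (ts!i - th0))^2)"
    note WW = weights[where A="info_matrix f \<xi>" and u=u and lam=lam and w=w]
    have W1: "\<And>i. i < CARD('p) \<Longrightarrow> 0 < (norm (ts!i - th0))^2"
      by (rule WW(1)) (use info_sym nv ov eig ts w_def in blast)+
    have W2: "\<And>i j. i < CARD('p) \<Longrightarrow> j < CARD('p) \<Longrightarrow> 0 \<le> w i j"
      by (rule WW(2)) (use info_sym nv ov eig ts w_def in blast)+
    have W3: "\<And>i. i < CARD('p) \<Longrightarrow> (\<Sum>j<CARD('p). w i j) = 1"
      by (rule WW(3)) (use info_sym nv ov eig ts w_def in blast)+
    have W4: "\<And>j. j < CARD('p) \<Longrightarrow> (\<Sum>i<CARD('p). w i j) = 1"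
      by (rule WW(4)) (use info_sym nv ov eig ts w_def in blast)+
    have W5: "\<And>i. i < CARD('p) \<Longrightarrow> (ts!i - th0) \<bullet> (info_matrix f \<xi> *v (ts!i - th0)) = (norm (ts!i - th0))^2 * (\<Sum>j<CARD('p). w i j * lam j)"
      by (rule WW(5)) (use info_sym nv ov eig ts w_def in blast)+
    show ?thesis using W1 W2 W3 W4 W5 by (intro exI[of _ w]) (simp add: xi_dist2_lin)
  qed
  have objD0: "obj_eD (lin_model f) \<xi> th0 ts0 = (\<Prod>i<CARD('p). lam i) powr (1 / real CARD('p))"
  proof -
    have "obj_eD (lin_model f) \<xi> th0 ts0 = ((1 / real CARD('p)) * (\<Sum>i<CARD('p). 1)) / ((\<Prod>j<CARD('p). 1 / lam j) powr (1 / real CARD('p)))"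
      unfolding obj_eD_def by (simp add: xd0 nd0)
    also have "(\<Prod>j<CARD('p). 1 / lam j) = 1 / (\<Prod>j<CARD('p). lam j)" by (simp add: prod_dividef)
    also have "(1 / (\<Prod>j<CARD('p). lam j)) powr (1 / real CARD('p)) = 1 / ((\<Prod>j<CARD('p). lam j) powr (1 / real CARD('p)))"
      using Pl by (simp add: powr_divide)
    finally show ?thesis using pos by simp
  qed
  have lowD: "(\<Prod>i<CARD('p). lam i) powr (1 / real CARD('p)) \<le> obj_eD (lin_model f) \<xi> th0 ts"
    if ts: "ts \<in> V_set th0" for ts
  proof -
    obtain w where W: "\<forall>i<CARD('p). 0 < (norm (ts!i - th0))^2"
      "\<forall>i<CARD('p). \<forall>j<CARD('p). 0 \<le> w i j"
      "\<forall>i<CARD('p). (\<Sum>j<CARD('p). w i j) = 1"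
      "\<forall>j<CARD('p). (\<Sum>i<CARD('p). w i j) = 1"
      "\<forall>i<CARD('p). xi_dist2 (lin_model f) \<xi> (ts!i) th0 = (norm (ts!i - th0))^2 * (\<Sum>j<CARD('p). w i j * lam j)"
      using WS[OF ts] by blast
    have "(\<Prod>i<CARD('p). lam i) powr (1 / real CARD('p)) \<le>
      ((1 / real CARD('p)) * (\<Sum>i<CARD('p). (norm (ts!i - th0))^2 * (\<Sum>j<CARD('p). w i j * lam j))) /
      ((\<Prod>i<CARD('p). (norm (ts!i - th0))^2) powr (1 / real CARD('p)))"
      by (rule ineq_D) (use pos lp W in auto)
    also have "\<dots> = obj_eD (lin_model f) \<xi> th0 ts"
      unfolding obj_eD_def using W(5) by simp
    finally show ?thesis .
  qed
  have phiD: "phi_eD (lin_model f) \<xi> th0 = (\<Prod>i<CARD('p). lam i) powr (1 / real CARD('p))"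
    unfolding phi_eD_def
  proof (rule cInf_eq_minimum)
    show "(\<Prod>i<CARD('p). lam i) powr (1 / real CARD('p)) \<in> obj_eD (lin_model f) \<xi> th0 ` V_set th0"
      using ts0V objD0 by (metis image_eqI)
  qed (use lowD in auto)
  have objA0: "obj_eA (lin_model f) \<xi> th0 ts0 = 1 / L"
  proof -
    have "obj_eA (lin_model f) \<xi> th0 ts0 = (\<Sum>i<CARD('p). 1 / lam i) / (\<Sum>j<CARD('p). 1 / lam j)^2"
      unfolding obj_eA_def by (simp add: xd0 nd0)
    thus ?thesis using Lpos by (simp add: L_def[symmetric] power2_eq_square)
  qed
  have lowA: "1 / L \<le> obj_eA (lin_model f) \<xi> th0 ts" if ts: "ts \<in> V_set th0" for ts
  proof -
    obtain w where W: "\<forall>i<CARD('p). 0 < (norm (ts!i - th0))^2"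
      "\<forall>i<CARD('p). \<forall>j<CARD('p). 0 \<le> w i j"
      "\<forall>i<CARD('p). (\<Sum>j<CARD('p). w i j) = 1"
      "\<forall>j<CARD('p). (\<Sum>i<CARD('p). w i j) = 1"
      "\<forall>i<CARD('p). xi_dist2 (lin_model f) \<xi> (ts!i) th0 = (norm (ts!i - th0))^2 * (\<Sum>j<CARD('p). w i j * lam j)"
      using WS[OF ts] by blast
    have "1 / L \<le> (\<Sum>i<CARD('p). (norm (ts!i - th0))^2 * ((norm (ts!i - th0))^2 * (\<Sum>j<CARD('p). w i j * lam j))) /
        (\<Sum>i<CARD('p). (norm (ts!i - th0))^2)^2"
      unfolding L_def by (rule ineq_A) (use pos lp W in auto)
    also have "\<dots> = obj_eA (lin_model f) \<xi> th0 ts"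
      unfolding obj_eA_def using W(5) by simp
    finally show ?thesis .
  qed
  have phiA: "phi_eA (lin_model f) \<xi> th0 = 1 / L"
    unfolding phi_eA_def
  proof (rule cInf_eq_minimum)
    show "1 / L \<in> obj_eA (lin_model f) \<xi> th0 ` V_set th0"
      using ts0V objA0 by (metis image_eqI)
  qed (use lowA in auto)
  show ?thesis
    using ts0V objD0 phiD objA0 phiA detA trA by (auto simp: phi_D_def phi_A_def)
qed



theorem theorem2:
  fixes f :: "'x::finite \<Rightarrow> real^'p" and th0 :: "real^'p"
  shows
    "(\<forall>\<xi>. design_plus f \<xi> \<longrightarrow>
        (\<exists>ts\<in>V_set th0. obj_eD (lin_model f) \<xi> th0 ts = phi_eD (lin_model f) \<xi> th0) \<and>
        phi_eD (lin_model f) \<xi> th0 = phi_D f \<xi> \<and>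
        (\<exists>ts\<in>V_set th0. obj_eA (lin_model f) \<xi> th0 ts = phi_eA (lin_model f) \<xi> th0) \<and>
        phi_eA (lin_model f) \<xi> th0 = phi_A f \<xi>)
   \<and> (\<forall>\<xi>. design \<xi> \<longrightarrow> (\<forall>k\<in>{1..CARD('p)}.
        (\<exists>ts\<in>V_set th0. obj_eE k (lin_model f) \<xi> th0 ts = phi_eE k (lin_model f) \<xi> th0) \<and>
        phi_eE k (lin_model f) \<xi> th0 = phi_E k f \<xi>))"
  using partDA partE by (metis atLeastAtMost_iff)


end
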